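(* Let $n \in \mathbb{N}$ be even. For every $\epsilon > 0$ sufficiently small, there exists a set $X$ of $n$ points in $\mathbb{R}^2$ (an instance of the Euclidean TSP in the plane) such that the approximation ratio of X-opt on $X$ is at least $\frac{n}{2}(1-\epsilon)$. That is, there is a noncrossing tour $T$ through $X$ with $\ell(T) \geq \frac{n}{2}(1-\epsilon)\cdot \ell(T^* )$, where $T^*$ is a shortest tour through $X$. In particular, the approximation ratio can be brought arbitrarily close to $\frac{n}{2}$.
   Context: Euclidean TSP in the plane: given a finite set $X \subset \mathbb{R}^2$, a tour is a Hamiltonian cycle on $X$; the length of an edge $\{x,y\}$ is the Euclidean distance $d(x,y)$, and the length $\ell(T)$ of a tour is the sum of its edge lengths. For an edge $e=\{x,y\}$, $L(e)$ denotes the closed line segment from $x$ to $y$. A set of edges is noncrossing if no two of its edges have intersecting line segments (other than at a shared endpoint). X-opt is the local search heuristic that repeatedly replaces two edges of the tour whose line segments intersect by two other edges so as to obtain a tour again; its local optima are exactly the noncrossing tours. The approximation ratio of X-opt on an instance is the ratio of the length of the longest noncrossing tour to the length of an optimal (shortest) tour. *)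

theory Defs
  imports "HOL-Analysis.Analysis"
begin

type_synonym point = "real^2"

text \<open>A tour on a finite set X is a Hamiltonian cycle on X, represented by a list
  enumerating the points of X (each exactly once) in cyclic order.\<close>
definition is_tour :: "point set \<Rightarrow> point list \<Rightarrow> bool" where
  "is_tour X xs \<longleftrightarrow> distinct xs \<and> set xs = X"

definition tour_edges :: "point list \<Rightarrow> point set set" where
  "tour_edges xs = {{xs ! i, xs ! ((i + 1) mod length xs)} | i. i < length xs}"

definition tour_length :: "point list \<Rightarrow> real" where
  "tour_length xs = (\<Sum>i<length xs. dist (xs ! i) (xs ! ((i + 1) mod length xs)))"

definition noncrossing :: "point set set \<Rightarrow> bool" where
  "noncrossing E \<longleftrightarrow>
     (\<forall>x y u v. {x, y} \<in> E \<and> {u, v} \<in> E \<and> {x, y} \<noteq> {u, v} \<longrightarrow>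
        closed_segment x y \<inter> closed_segment u v \<subseteq> {x, y} \<inter> {u, v})"

definition noncrossing_tour :: "point set \<Rightarrow> point list \<Rightarrow> bool" where
  "noncrossing_tour X xs \<longleftrightarrow> is_tour X xs \<and> noncrossing (tour_edges xs)"

definition opt_tour_length :: "point set \<Rightarrow> real" where
  "opt_tour_length X = Min {tour_length xs | xs. is_tour X xs}"

end

theory Submission
  imports Defs
begin
lemma pt_eq: "(p::real^2) = q \<longleftrightarrow> p$1 = q$1 \<and> p$2 = q$2"
  by (simp add: vec_eq_iff forall_2)

lemma key_below:
  fixes p1 q1 p2 q2 z :: "real^2"
  assumes a1: "p1$1 < 1" and ac: "p1$1 \<le> p2$1" and c1: "p2$1 < 1"
    and q1x: "q1$1 = 1" and q2x: "q2$1 = 1"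
    and H1: "p1 = p2 \<or> (p2$2 - p1$2) * (1 - p1$1) < (q1$2 - p1$2) * (p2$1 - p1$1)"
    and H2: "q2$2 \<le> q1$2"
    and H3: "\<not> (p1 = p2 \<and> q1$2 = q2$2)"
    and z1: "z \<in> closed_segment p1 q1" and z2: "z \<in> closed_segment p2 q2"
  shows "(z = p1 \<and> z = p2) \<or> (z = q1 \<and> z = q2)"
proof -
  obtain u where u: "0 \<le> u" "u \<le> 1" "z = (1 - u) *\<^sub>R p1 + u *\<^sub>R q1"
    using z1 by (auto simp: in_segment)
  obtain v where v: "0 \<le> v" "v \<le> 1" "z = (1 - v) *\<^sub>R p2 + v *\<^sub>R q2"
    using z2 by (auto simp: in_segment)
  define a where "a = p1$1"
  define c where "c = p2$1"
  define py where "py = p1$2"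
  define ry where "ry = p2$2"
  define qy where "qy = q1$2"
  define ty where "ty = q2$2"
  have x1: "z$1 = (1-u) * a + u" using u(3) q1x by (simp add: a_def)
  have x2: "z$1 = (1-v) * c + v" using v(3) q2x by (simp add: c_def)
  have y1: "z$2 = (1-u) * py + u * qy" using u(3) by (simp add: py_def qy_def)
  have y2: "z$2 = (1-v) * ry + v * ty" using v(3) by (simp add: ry_def ty_def)
  show ?thesis
  proof (cases "p1 = p2")
    case True
    then have "a = c" "py = ry" by (auto simp: a_def c_def py_def ry_def)
    with x1 x2 have "(u - v) * (1 - a) = 0" by (simp add: algebra_simps)
    with a1 have uv: "u = v" by (simp add: a_def)
    have "qy \<noteq> ty" using H3 True by (simp add: qy_def ty_def)
    from y1 y2 uv \<open>py = ry\<close> have "u * qy = u * ty" by auto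
    then have "u * (qy - ty) = 0" by (simp add: right_diff_distrib)
    with \<open>qy \<noteq> ty\<close> have "u = 0" by simp
    then have "z = p1" using u(3) by simp
    then show ?thesis using True by simp
  next
    case False
    with H1 have D0: "(ry - py) * (1 - a) < (qy - py) * (c - a)"
      by (simp add: a_def c_def py_def ry_def qy_def)
    have ux: "u * (1-a) = (1-v) * (c-a) + v * (1-a)" using x1 x2 by (simp add: algebra_simps)
    have "z$2 * (1-a) = py * (1-a) + (qy-py) * (u * (1-a))" by (simp add: y1 algebra_simps)
    also have "\<dots> = py * (1-a) + (qy-py) * ((1-v) * (c-a) + v * (1-a))" by (simp add: ux)
    finally have e1: "z$2 * (1-a) = py * (1-a) + (qy-py) * ((1-v) * (c-a) + v * (1-a))" .
    have e2: "z$2 * (1-a) = ((1-v) * ry + v * ty) * (1-a)" using y2 by simp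
    have diff: "0 = (1-v) * ((qy-py) * (c-a) - (ry-py) * (1-a)) + v * (1-a) * (qy-ty)"
      using e1 e2 by (simp add: algebra_simps)
    have "v = 1"
    proof (rule ccontr)
      assume "v \<noteq> 1"
      with v have "0 < 1 - v" by simp
      with D0 have "0 < (1-v) * ((qy-py) * (c-a) - (ry-py) * (1-a))" by simp
      moreover have "0 \<le> v * (1-a) * (qy-ty)" using v(1) a1 H2 by (simp add: a_def qy_def ty_def)
      ultimately show False using diff by linarith
    qed
    then have zq2: "z = q2" using v(3) by simp
    then have "z$1 = 1" using q2x by simp
    with x1 have "(1 - u) * (1-a) = 0" by (simp add: algebra_simps)
    with a1 have "u = 1" by (simp add: a_def)
    then have "z = q1" using u(3) by simp
    then show ?thesis using zq2 by simp
  qed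
qed

lemma key_above:
  fixes p1 q1 p2 q2 z :: "real^2"
  assumes a1: "p1$1 < 1" and ac: "p1$1 \<le> p2$1" and c1: "p2$1 < 1"
    and q1x: "q1$1 = 1" and q2x: "q2$1 = 1"
    and H1: "p1 = p2 \<or> (q1$2 - p1$2) * (p2$1 - p1$1) < (p2$2 - p1$2) * (1 - p1$1)"
    and H2: "q1$2 \<le> q2$2"
    and H3: "\<not> (p1 = p2 \<and> q1$2 = q2$2)"
    and z1: "z \<in> closed_segment p1 q1" and z2: "z \<in> closed_segment p2 q2"
  shows "(z = p1 \<and> z = p2) \<or> (z = q1 \<and> z = q2)"
proof -
  obtain u where u: "0 \<le> u" "u \<le> 1" "z = (1 - u) *\<^sub>R p1 + u *\<^sub>R q1"
    using z1 by (auto simp: in_segment)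
  obtain v where v: "0 \<le> v" "v \<le> 1" "z = (1 - v) *\<^sub>R p2 + v *\<^sub>R q2"
    using z2 by (auto simp: in_segment)
  define a where "a = p1$1"
  define c where "c = p2$1"
  define py where "py = p1$2"
  define ry where "ry = p2$2"
  define qy where "qy = q1$2"
  define ty where "ty = q2$2"
  have x1: "z$1 = (1-u) * a + u" using u(3) q1x by (simp add: a_def)
  have x2: "z$1 = (1-v) * c + v" using v(3) q2x by (simp add: c_def)
  have y1: "z$2 = (1-u) * py + u * qy" using u(3) by (simp add: py_def qy_def)
  have y2: "z$2 = (1-v) * ry + v * ty" using v(3) by (simp add: ry_def ty_def)
  show ?thesis
  proof (cases "p1 = p2")
    case True
    then have "a = c" "py = ry" by (auto simp: a_def c_def py_def ry_def)
    with x1 x2 have "(u - v) * (1 - a) = 0" by (simp add: algebra_simps)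
    with a1 have uv: "u = v" by (simp add: a_def)
    have "qy \<noteq> ty" using H3 True by (simp add: qy_def ty_def)
    from y1 y2 uv \<open>py = ry\<close> have "u * qy = u * ty" by auto
    then have "u * (qy - ty) = 0" by (simp add: right_diff_distrib)
    with \<open>qy \<noteq> ty\<close> have "u = 0" by simp
    then have "z = p1" using u(3) by simp
    then show ?thesis using True by simp
  next
    case False
    with H1 have D0: "(qy - py) * (c - a) < (ry - py) * (1 - a)"
      by (simp add: a_def c_def py_def ry_def qy_def)
    have ux: "u * (1-a) = (1-v) * (c-a) + v * (1-a)" using x1 x2 by (simp add: algebra_simps)
    have "z$2 * (1-a) = py * (1-a) + (qy-py) * (u * (1-a))" by (simp add: y1 algebra_simps)
    also have "\<dots> = py * (1-a) + (qy-py) * ((1-v) * (c-a) + v * (1-a))" by (simp add: ux)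
    finally have e1: "z$2 * (1-a) = py * (1-a) + (qy-py) * ((1-v) * (c-a) + v * (1-a))" .
    have e2: "z$2 * (1-a) = ((1-v) * ry + v * ty) * (1-a)" using y2 by simp
    have diff: "0 = (1-v) * ((qy-py) * (c-a) - (ry-py) * (1-a)) + v * (1-a) * (qy-ty)"
      using e1 e2 by (simp add: algebra_simps)
    have "v = 1"
    proof (rule ccontr)
      assume "v \<noteq> 1"
      with v have "0 < 1 - v" by simp
      with D0 have "(1-v) * ((qy-py) * (c-a) - (ry-py) * (1-a)) < 0" by (simp add: mult_pos_neg)
      moreover have "v * (1-a) * (qy-ty) \<le> 0" using v(1) a1 H2 unfolding a_def qy_def ty_def by (intro mult_nonneg_nonpos mult_nonneg_nonneg) auto
      ultimately show False using diff by linarith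
    qed
    then have zq2: "z = q2" using v(3) by simp
    then have "z$1 = 1" using q2x by simp
    with x1 have "(1 - u) * (1-a) = 0" by (simp add: algebra_simps)
    with a1 have "u = 1" by (simp add: a_def)
    then have "z = q1" using u(3) by simp
    then show ?thesis using zq2 by simp
  qed
qed


definition Pt :: "real \<Rightarrow> nat \<Rightarrow> nat \<Rightarrow> point" where
  "Pt s k m = (if m = 0 then vector [0,0] else if odd m then vector [1, s * (real k - real m)]
     else vector [s, s^2 * (real k - real m)])"

lemma Pt1: "Pt s k m $ 1 = (if m = 0 then 0 else if odd m then 1 else s)"
  by (simp add: Pt_def)
lemma Pt2: "Pt s k m $ 2 = (if m = 0 then 0 else if odd m then s * (real k - real m) else s^2 * (real k - real m))"
  by (simp add: Pt_def)

lemma Pt_inj: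
  assumes "0 < s" "s < 1" "Pt s k m = Pt s k m'"
  shows "m = m'"
proof -
  have x: "Pt s k m $ 1 = Pt s k m' $ 1" and y: "Pt s k m $ 2 = Pt s k m' $ 2" using assms(3) by auto
  show ?thesis
  proof (cases "m = 0")
    case True then show ?thesis using x assms(1,2) by (auto simp: Pt1 split: if_splits)
  next
    case m0: False
    show ?thesis
    proof (cases "m' = 0")
      case True then show ?thesis using x assms(1,2) m0 by (auto simp: Pt1 split: if_splits)
    next
      case False
      then show ?thesis using x y assms(1,2) m0 by (auto simp: Pt1 Pt2 split: if_splits)
    qed
  qed
qed

definition EL :: "real \<Rightarrow> nat \<Rightarrow> nat \<Rightarrow> point" where
  "EL s k m = (if m = 0 \<or> m = 2*k-1 then Pt s k 0 else if odd m then Pt s k (m+1) else Pt s k m)"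
definition ER :: "real \<Rightarrow> nat \<Rightarrow> nat \<Rightarrow> point" where
  "ER s k m = (if m = 0 then Pt s k 1 else if m = 2*k-1 then Pt s k (2*k-1)
     else if odd m then Pt s k m else Pt s k (m+1))"

lemma edge_eq:
  assumes "m < 2*k"
  shows "{Pt s k m, Pt s k ((m+1) mod (2*k))} = {EL s k m, ER s k m}"
proof -
  consider "m = 0" | "m \<noteq> 0" "m = 2*k-1" | "m \<noteq> 0" "m \<noteq> 2*k-1" by blast
  then show ?thesis
  proof cases
    case 1
    then show ?thesis using assms by (cases "k = 1") (auto simp: EL_def ER_def)
  next
    case 2
    then have "(m+1) mod (2*k) = 0" using assms by simp
    then show ?thesis using 2 by (auto simp: EL_def ER_def)
  next
    case 3
    then have "(m+1) mod (2*k) = m+1" using assms by simp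
    then show ?thesis using 3 by (auto simp: EL_def ER_def)
  qed
qed

definition eidx :: "nat \<Rightarrow> nat" where "eidx m = (if odd m then m+1 else m)"
definition oidx :: "nat \<Rightarrow> nat" where "oidx m = (if odd m then m else m+1)"

lemma zig:
  assumes "0 < m" "m < 2*k-1" "0 < s"
  shows "EL s k m $ 1 = s" "EL s k m $ 2 = s^2 * (real k - real (eidx m))"
    "ER s k m $ 1 = 1" "ER s k m $ 2 = s * (real k - real (oidx m))"
    "EL s k m = Pt s k (eidx m)" "ER s k m = Pt s k (oidx m)"
  using assms by (auto simp: EL_def ER_def Pt1 Pt2 eidx_def oidx_def)

lemma ee_oo_mono: "m < m' \<Longrightarrow> eidx m \<le> eidx m' \<and> oidx m \<le> oidx m'"
  by (auto simp: eidx_def oidx_def)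

lemma ee_oo_bounds: "0 < m \<Longrightarrow> m < 2*k-1 \<Longrightarrow> 2 \<le> eidx m \<and> eidx m \<le> 2*k-2 \<and> 1 \<le> oidx m \<and> oidx m \<le> 2*k-1"
  unfolding eidx_def oidx_def by (simp split: if_split; presburger)

lemma ee_oo_inj: "eidx m = eidx m' \<Longrightarrow> oidx m = oidx m' \<Longrightarrow> m = m'"
  by (auto simp: eidx_def oidx_def split: if_splits)


lemma edge0:
  shows "EL s k 0 = Pt s k 0" "ER s k 0 = Pt s k 1"
    "Pt s k 0 $ 1 = 0" "Pt s k 0 $ 2 = 0" "Pt s k 1 $ 1 = 1" "Pt s k 1 $ 2 = s * (real k - 1)"
  by (auto simp: EL_def ER_def Pt1 Pt2)

lemma edgelast:
  assumes "1 \<le> k"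
  shows "EL s k (2*k-1) = Pt s k 0" "ER s k (2*k-1) = Pt s k (2*k-1)"
    "Pt s k (2*k-1) $ 1 = 1" "Pt s k (2*k-1) $ 2 = s * (1 - real k)"
  using assms by (auto simp: EL_def ER_def Pt1 Pt2 of_nat_diff)

lemma ordered_nc:
  assumes s: "0 < s" "s < 1" and mm: "m < m'" "m' < 2*k"
    and ne: "{EL s k m, ER s k m} \<noteq> {EL s k m', ER s k m'}"
    and z1: "z \<in> closed_segment (EL s k m) (ER s k m)"
    and z2: "z \<in> closed_segment (EL s k m') (ER s k m')"
  shows "z \<in> {EL s k m, ER s k m} \<inter> {EL s k m', ER s k m'}"
proof -
  have k1: "1 \<le> k" using mm by simp
  note E0 = edge0[of s k] and EN = edgelast[OF k1, of s]
  consider "m = 0" "m' = 2*k-1" | "m = 0" "m' < 2*k-1" | "0 < m" "m' = 2*k-1" | "0 < m" "m' < 2*k-1"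
    using mm by linarith
  then show ?thesis
  proof cases
    case 1
    have k2: "k \<noteq> 1" using ne 1 E0 EN by auto
    have H3: "s * (real k - 1) \<noteq> s * (1 - real k)" using k2 s by simp
    have H2: "s * (1 - real k) \<le> s * (real k - 1)" using k1 s by (simp add: mult_left_mono)
    have "(z = Pt s k 0 \<and> z = Pt s k 0) \<or> (z = Pt s k 1 \<and> z = Pt s k (2*k-1))"
      by (rule key_below[of "Pt s k 0" "Pt s k 0" "Pt s k 1" "Pt s k (2*k-1)"])
        (use z1 z2 1 E0 EN H2 H3 in auto)
    then show ?thesis using 1 E0 EN by auto
  next
    case 2
    note Z = zig[OF _ 2(2) s(1)] and B = ee_oo_bounds[OF _ 2(2)]
    have m'0: "0 < m'" using 2 mm by simp
    have H1: "(s^2 * (real k - real (eidx m')) - 0) * (1 - 0) < (s * (real k - 1) - 0) * (s - 0)"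
    proof -
      have "real k - real (eidx m') < real k - 1" using B[OF m'0] by simp
      then have "s^2 * (real k - real (eidx m')) < s^2 * (real k - 1)" using s by simp
      then show ?thesis by (simp add: power2_eq_square mult.commute mult.left_commute)
    qed
    have H2: "s * (real k - real (oidx m')) \<le> s * (real k - 1)"
      using B[OF m'0] s by (simp add: mult_left_mono)
    have ZZ: "z \<in> closed_segment (Pt s k 0) (Pt s k 1)" "z \<in> closed_segment (Pt s k (eidx m')) (Pt s k (oidx m'))"
      using z1 z2 2 E0 Z[OF m'0] by auto
    have C: "Pt s k (eidx m') $ 1 = s" "Pt s k (eidx m') $ 2 = s^2 * (real k - real (eidx m'))"
       "Pt s k (oidx m') $ 1 = 1" "Pt s k (oidx m') $ 2 = s * (real k - real (oidx m'))"
      using Z[OF m'0] by metis+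
    have "(z = Pt s k 0 \<and> z = Pt s k (eidx m')) \<or> (z = Pt s k 1 \<and> z = Pt s k (oidx m'))"
    proof (rule key_below[OF _ _ _ _ _ _ _ _ ZZ])
      show "(Pt s k 0 = Pt s k (eidx m')) \<or> (Pt s k (eidx m') $ 2 - Pt s k 0 $ 2) * (1 - Pt s k 0 $ 1)
        < (Pt s k 1 $ 2 - Pt s k 0 $ 2) * (Pt s k (eidx m') $ 1 - Pt s k 0 $ 1)"
        unfolding C E0 using H1 by simp
    qed (use C E0 s H2 in auto)
    then show ?thesis using 2 E0 Z[OF m'0] by auto
  next
    case 3
    have m0: "m < 2*k-1" using 3 mm by simp
    note Z = zig[OF 3(1) m0 s(1)] and B = ee_oo_bounds[OF 3(1) m0]
    have H1: "(s * (1 - real k) - 0) * (s - 0) < (s^2 * (real k - real (eidx m)) - 0) * (1 - 0)"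
    proof -
      have "1 - real k < real k - real (eidx m)" using B by linarith
      then have "s^2 * (1 - real k) < s^2 * (real k - real (eidx m))" using s by simp
      then show ?thesis by (simp add: power2_eq_square mult.commute mult.left_commute)
    qed
    have H2: "s * (1 - real k) \<le> s * (real k - real (oidx m))"
      using B s k1 by (intro mult_left_mono) linarith+
    have ZZ: "z \<in> closed_segment (Pt s k 0) (Pt s k (2*k-1))" "z \<in> closed_segment (Pt s k (eidx m)) (Pt s k (oidx m))"
      using z1 z2 3 EN Z by auto
    have C: "Pt s k (eidx m) $ 1 = s" "Pt s k (eidx m) $ 2 = s^2 * (real k - real (eidx m))"
       "Pt s k (oidx m) $ 1 = 1" "Pt s k (oidx m) $ 2 = s * (real k - real (oidx m))"
      using Z by metis+
    have "(z = Pt s k 0 \<and> z = Pt s k (eidx m)) \<or> (z = Pt s k (2*k-1) \<and> z = Pt s k (oidx m))"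
    proof (rule key_above[OF _ _ _ _ _ _ _ _ ZZ])
      show "(Pt s k 0 = Pt s k (eidx m)) \<or> (Pt s k (2*k-1) $ 2 - Pt s k 0 $ 2) * (Pt s k (eidx m) $ 1 - Pt s k 0 $ 1)
        < (Pt s k (eidx m) $ 2 - Pt s k 0 $ 2) * (1 - Pt s k 0 $ 1)"
        unfolding C E0 EN using H1 by simp
    qed (use C E0 EN s H2 in auto)
    then show ?thesis using 3 EN Z by auto
  next
    case 4
    have m0: "m < 2*k-1" using 4 mm by simp
    note Z = zig[OF 4(1) m0 s(1)] and Z' = zig[OF _ 4(2) s(1)]
    have m'0: "0 < m'" using 4 mm by simp
    note Z' = Z'[OF m'0]
    have mono: "eidx m \<le> eidx m'" "oidx m \<le> oidx m'" using ee_oo_mono[OF mm(1)] by auto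
    have H1: "EL s k m = EL s k m' \<or> (s^2 * (real k - real (eidx m')) - s^2 * (real k - real (eidx m))) * (1 - s) < (s * (real k - real (oidx m)) - s^2 * (real k - real (eidx m))) * (s - s)"
    proof (cases "eidx m = eidx m'")
      case True then show ?thesis using Z Z' by simp
    next
      case False
      then have "eidx m < eidx m'" using mono by simp
      then have "s^2 * (real k - real (eidx m')) < s^2 * (real k - real (eidx m))" using s by simp
      then show ?thesis using s by (simp add: mult_neg_pos)
    qed
    have H2: "s * (real k - real (oidx m')) \<le> s * (real k - real (oidx m))"
      using mono s by (intro mult_left_mono) auto
    have H3: "\<not> (EL s k m = EL s k m' \<and> s * (real k - real (oidx m)) = s * (real k - real (oidx m')))"
    proof
      assume a: "EL s k m = EL s k m' \<and> s * (real k - real (oidx m)) = s * (real k - real (oidx m'))"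
      then have "eidx m = eidx m'" using Z Z' Pt_inj[OF s] by metis
      moreover have "oidx m = oidx m'" using a s by simp
      ultimately show False using ee_oo_inj mm by fastforce
    qed
    have ZZ: "z \<in> closed_segment (Pt s k (eidx m)) (Pt s k (oidx m))" "z \<in> closed_segment (Pt s k (eidx m')) (Pt s k (oidx m'))"
      using z1 z2 Z Z' by auto
    have C: "Pt s k (eidx m) $ 1 = s" "Pt s k (eidx m) $ 2 = s^2 * (real k - real (eidx m))"
       "Pt s k (oidx m) $ 1 = 1" "Pt s k (oidx m) $ 2 = s * (real k - real (oidx m))"
       "Pt s k (eidx m') $ 1 = s" "Pt s k (eidx m') $ 2 = s^2 * (real k - real (eidx m'))"
       "Pt s k (oidx m') $ 1 = 1" "Pt s k (oidx m') $ 2 = s * (real k - real (oidx m'))"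
      using Z Z' by metis+
    have "(z = Pt s k (eidx m) \<and> z = Pt s k (eidx m')) \<or> (z = Pt s k (oidx m) \<and> z = Pt s k (oidx m'))"
    proof (rule key_below[OF _ _ _ _ _ _ _ _ ZZ])
      show "(Pt s k (eidx m) = Pt s k (eidx m')) \<or> (Pt s k (eidx m') $ 2 - Pt s k (eidx m) $ 2) * (1 - Pt s k (eidx m) $ 1)
        < (Pt s k (oidx m) $ 2 - Pt s k (eidx m) $ 2) * (Pt s k (eidx m') $ 1 - Pt s k (eidx m) $ 1)"
        unfolding C using H1 Z Z' by simp
      show "\<not> (Pt s k (eidx m) = Pt s k (eidx m') \<and> Pt s k (oidx m) $ 2 = Pt s k (oidx m') $ 2)"
        unfolding C using H3 Z Z' by simp
    qed (use C s H2 in auto)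
    then show ?thesis using Z Z' by auto
  qed
qed

definition TT :: "real \<Rightarrow> nat \<Rightarrow> point list" where
  "TT s k = map (Pt s k) [0..<2*k]"

lemma TT_len: "length (TT s k) = 2*k" by (simp add: TT_def)
lemma TT_nth: "i < 2*k \<Longrightarrow> TT s k ! i = Pt s k i" by (simp add: TT_def)

lemma Pt_inj_on: "0 < s \<Longrightarrow> s < 1 \<Longrightarrow> inj_on (Pt s k) A"
  by (auto intro: inj_onI Pt_inj)

lemma TT_distinct: "0 < s \<Longrightarrow> s < 1 \<Longrightarrow> distinct (TT s k)"
  by (simp add: TT_def distinct_map Pt_inj_on)

lemma seg_eq: "{x, y} = {a, b} \<Longrightarrow> closed_segment x y = closed_segment a b"
  by (metis closed_segment_commute doubleton_eq_iff)

lemma TT_edges: "e \<in> tour_edges (TT s k) \<Longrightarrow> \<exists>m < 2*k. e = {EL s k m, ER s k m}"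
  unfolding tour_edges_def TT_len using TT_nth edge_eq
  by (smt (verit, del_insts) mem_Collect_eq mod_less_divisor zero_less_iff_neq_zero not_less_zero)

lemma TT_noncrossing:
  assumes s: "0 < s" "s < 1"
  shows "noncrossing (tour_edges (TT s k))"
  unfolding noncrossing_def
proof (intro allI impI)
  fix x y u v
  assume a: "{x, y} \<in> tour_edges (TT s k) \<and> {u, v} \<in> tour_edges (TT s k) \<and> {x, y} \<noteq> {u, v}"
  obtain m where m: "m < 2*k" "{x,y} = {EL s k m, ER s k m}" using a TT_edges by blast
  obtain m' where m': "m' < 2*k" "{u,v} = {EL s k m', ER s k m'}" using a TT_edges by blast
  have ne: "{EL s k m, ER s k m} \<noteq> {EL s k m', ER s k m'}" using a m m' by simp
  then have "m \<noteq> m'" by auto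
  have main: "closed_segment (EL s k m) (ER s k m) \<inter> closed_segment (EL s k m') (ER s k m')
      \<subseteq> {EL s k m, ER s k m} \<inter> {EL s k m', ER s k m'}"
  proof (cases "m < m'")
    case True
    then show ?thesis using ordered_nc[OF s True m'(1) ne] by blast
  next
    case False
    have lt: "m' < m" using False \<open>m \<noteq> m'\<close> by simp
    then show ?thesis using ordered_nc[OF s lt m(1)] ne by blast
  qed
  show "closed_segment x y \<inter> closed_segment u v \<subseteq> {x, y} \<inter> {u, v}"
    unfolding seg_eq[OF m(2)] seg_eq[OF m'(2)] m(2) m'(2) by (rule main)
qed


lemma parity_next:
  fixes i k :: nat
  assumes "i < 2*k"
  shows "even i \<noteq> even ((i+1) mod (2*k))"
proof (cases "i + 1 < 2*k")
  case True then show ?thesis by simp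
next
  case False
  then have "i + 1 = 2*k" using assms by simp
  then show ?thesis by simp presburger
qed

lemma edge_lower:
  assumes s: "0 < s" "s < 1" and i: "i < 2*k"
  shows "1 - s \<le> dist (Pt s k i) (Pt s k ((i+1) mod (2*k)))"
proof -
  define j where "j = (i+1) mod (2*k)"
  have par: "even i \<noteq> even j" using parity_next[OF i] by (simp add: j_def)
  have "1 - s \<le> \<bar>Pt s k i $ 1 - Pt s k j $ 1\<bar>"
    using par s by (auto simp: Pt1 odd_pos)
  also have "\<dots> = dist (Pt s k i $ 1) (Pt s k j $ 1)" by (simp add: dist_real_def)
  also have "\<dots> \<le> dist (Pt s k i) (Pt s k j)" by (rule dist_vec_nth_le)
  finally show ?thesis by (simp add: j_def)
qed

lemma tour_length_TT:
  "tour_length (TT s k) = (\<Sum>i<2*k. dist (Pt s k i) (Pt s k ((i+1) mod (2*k))))"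
proof -
  have "\<And>i. i < 2*k \<Longrightarrow> (i+1) mod (2*k) < 2*k" by simp
  then show ?thesis unfolding tour_length_def TT_len
    by (intro sum.cong) (auto simp: TT_nth)
qed

lemma TT_lower:
  assumes s: "0 < s" "s < 1"
  shows "real (2*k) * (1 - s) \<le> tour_length (TT s k)"
proof -
  have "(\<Sum>i<2*k. (1 - s)) \<le> (\<Sum>i<2*k. dist (Pt s k i) (Pt s k ((i+1) mod (2*k))))"
    by (rule sum_mono) (use edge_lower[OF s] in auto)
  then show ?thesis by (simp add: tour_length_TT)
qed

lemma Pt_y_bound:
  assumes s: "0 < s" "s \<le> 1" and m: "m \<le> 2*k"
  shows "\<bar>Pt s k m $ 2\<bar> \<le> (if odd m then s * real k else s^2 * real k)"
proof -
  have "\<bar>real k - real m\<bar> \<le> real k" using m by linarith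
  then have A: "s * \<bar>real k - real m\<bar> \<le> s * real k" "s^2 * \<bar>real k - real m\<bar> \<le> s^2 * real k"
    using s by (auto intro: mult_left_mono)
  show ?thesis using A s by (auto simp: Pt2 abs_mult)
qed

lemma dist_bound:
  assumes s: "0 < s" "s \<le> 1" and k: "1 \<le> k" and m: "m \<le> 2*k" and m': "m' \<le> 2*k"
  shows "dist (Pt s k m) (Pt s k m') \<le> 3 * s * real k + (if even m = even m' then 0 else 1)"
proof -
  have sk: "s^2 * real k \<le> s * real k" "s \<le> s * real k" "0 \<le> s^2 * real k"
  proof -
    have "s^2 \<le> s" using s by (simp add: power2_eq_square mult_left_le)
    then show "s^2 * real k \<le> s * real k" by (simp add: mult_right_mono)
    show "s \<le> s * real k" using k s by simp
    show "0 \<le> s^2 * real k" by simp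
  qed
  have "dist (Pt s k m) (Pt s k m') = norm (Pt s k m - Pt s k m')" by (simp add: dist_norm)
  also have "\<dots> \<le> \<bar>(Pt s k m - Pt s k m') $ 1\<bar> + \<bar>(Pt s k m - Pt s k m') $ 2\<bar>"
    by (metis norm_le_l1_cart sum_2)
  also have "\<dots> = \<bar>Pt s k m $ 1 - Pt s k m' $ 1\<bar> + \<bar>Pt s k m $ 2 - Pt s k m' $ 2\<bar>" by simp
  also have "\<dots> \<le> 3 * s * real k + (if even m = even m' then 0 else 1)"
  proof -
    have y1: "\<bar>Pt s k m $ 2\<bar> \<le> (if odd m then s * real k else s^2 * real k)" using Pt_y_bound[OF s m] .
    have y2: "\<bar>Pt s k m' $ 2\<bar> \<le> (if odd m' then s * real k else s^2 * real k)" using Pt_y_bound[OF s m'] .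
    have dy: "\<bar>Pt s k m $ 2 - Pt s k m' $ 2\<bar> \<le> \<bar>Pt s k m $ 2\<bar> + \<bar>Pt s k m' $ 2\<bar>" by (rule abs_triangle_ineq4)
    have x: "\<bar>Pt s k m $ 1 - Pt s k m' $ 1\<bar> \<le> (if even m = even m' then (if odd m then 0 else s) else 1)"
      using s by (auto simp: Pt1)
    show ?thesis using x y1 y2 dy sk by (auto split: if_splits)
  qed
  finally show ?thesis .
qed

definition qi :: "nat \<Rightarrow> nat \<Rightarrow> nat" where
  "qi k i = (if i < k then 2*i else 2*(2*k-1-i)+1)"

lemma qi_inj: "inj_on (qi k) {..<2*k}"
  by (rule inj_onI) (auto simp: qi_def split: if_splits; presburger)

lemma qi_range: "i < 2*k \<Longrightarrow> qi k i < 2*k"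
  by (auto simp: qi_def)

lemma qi_image: "qi k ` {..<2*k} = {..<2*k}"
  by (rule endo_inj_surj) (auto simp: qi_inj qi_range)

lemma qi_even: "i < 2*k \<Longrightarrow> even (qi k i) \<longleftrightarrow> i < k"
  by (auto simp: qi_def)

definition QQ :: "real \<Rightarrow> nat \<Rightarrow> point list" where
  "QQ s k = map (Pt s k) (map (qi k) [0..<2*k])"

lemma QQ_tour:
  assumes s: "0 < s" "s < 1"
  shows "is_tour (set (TT s k)) (QQ s k)"
proof -
  have d: "distinct (map (qi k) [0..<2*k])"
    using qi_inj by (simp add: distinct_map atLeast0LessThan)
  have st: "set (map (qi k) [0..<2*k]) = {..<2*k}"
    using qi_image by (simp add: atLeast0LessThan)
  have i2: "inj_on (Pt s k) (set (map (qi k) [0..<2*k]))" using Pt_inj_on[OF s] by blast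
  have "distinct (QQ s k)" unfolding QQ_def using d i2 by (simp only: distinct_map)
  moreover have "set (QQ s k) = set (TT s k)" unfolding QQ_def TT_def
    by (simp only: set_map st) (simp add: atLeast0LessThan qi_image)
  ultimately show ?thesis by (simp add: is_tour_def)
qed

lemma QQ_len: "length (QQ s k) = 2*k" by (simp add: QQ_def)
lemma QQ_nth: "i < 2*k \<Longrightarrow> QQ s k ! i = Pt s k (qi k i)" by (simp add: QQ_def)

lemma QQ_upper:
  assumes s: "0 < s" "s \<le> 1" and k: "1 \<le> k"
  shows "tour_length (QQ s k) \<le> 6 * s * real k ^ 2 + 2"
proof -
  have tm: "dist (QQ s k ! i) (QQ s k ! ((i+1) mod (2*k)))
      \<le> 3 * s * real k + ((if i = k-1 then 1 else 0) + (if i = 2*k-1 then 1 else 0))"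
    if i: "i < 2*k" for i
  proof -
    define j where "j = (i+1) mod (2*k)"
    have j: "j < 2*k" using i by (simp add: j_def)
    have par: "(if even (qi k i) = even (qi k j) then 0 else 1::real)
        \<le> (if i = k-1 then 1 else 0) + (if i = 2*k-1 then 1 else 0)"
    proof (cases "i = k-1 \<or> i = 2*k-1")
      case True then show ?thesis by auto
    next
      case False
      then have "j = i+1" "i + 1 < 2*k" using i k by (auto simp: j_def)
      then have "even (qi k i) = even (qi k j)" using qi_even[OF i] qi_even[OF j] False by auto
      then show ?thesis by simp
    qed
    have "dist (Pt s k (qi k i)) (Pt s k (qi k j)) \<le> 3 * s * real k + (if even (qi k i) = even (qi k j) then 0 else 1)"
      using dist_bound[OF s k] qi_range[OF i] qi_range[OF j] by simp
    then show ?thesis using par QQ_nth[OF i] QQ_nth[OF j] by (simp add: j_def)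
  qed
  have "tour_length (QQ s k) \<le> (\<Sum>i<2*k. 3 * s * real k + ((if i = k-1 then 1 else 0) + (if i = 2*k-1 then 1 else 0)))"
    unfolding tour_length_def QQ_len by (rule sum_mono) (use tm in auto)
  also have "\<dots> = real (2*k) * (3 * s * real k) + 2"
    using k by (simp add: sum.distrib)
  also have "\<dots> = 6 * s * real k ^ 2 + 2" by (simp add: power2_eq_square)
  finally show ?thesis .
qed

lemma opt_le:
  assumes "is_tour X xs" "finite X"
  shows "opt_tour_length X \<le> tour_length xs"
proof -
  have "{tour_length xs |xs. is_tour X xs} \<subseteq> tour_length ` {xs. set xs \<subseteq> X \<and> length xs = card X}"
    by (auto simp: is_tour_def distinct_card)
  then have "finite {tour_length xs |xs. is_tour X xs}"
    using finite_lists_length_eq[OF assms(2)] finite_subset by blast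
  then show ?thesis unfolding opt_tour_length_def using assms(1) by (auto intro: Min_le)
qed

theorem theorem1:
  fixes n :: nat
  assumes "even n"
  shows "\<exists>\<epsilon>0 > 0. \<forall>\<epsilon>::real. 0 < \<epsilon> \<and> \<epsilon> < \<epsilon>0 \<longrightarrow>
           (\<exists>X :: point set. finite X \<and> card X = n \<and>
              (\<exists>T. noncrossing_tour X T \<and>
                   tour_length T \<ge> real n / 2 * (1 - \<epsilon>) * opt_tour_length X))"
proof (intro exI[of _ "1::real"] conjI allI impI)
  show "(0::real) < 1" by simp
  fix \<epsilon> :: real
  assume e: "0 < \<epsilon> \<and> \<epsilon> < 1"
  obtain k where nk: "n = 2*k" using assms by (auto elim: evenE)
  show "\<exists>X :: point set. finite X \<and> card X = n \<and>
              (\<exists>T. noncrossing_tour X T \<and>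
                   tour_length T \<ge> real n / 2 * (1 - \<epsilon>) * opt_tour_length X)"
  proof (cases "k = 0")
    case True
    then have n0: "n = 0" using nk by simp
    have "noncrossing_tour {} []"
      by (simp add: noncrossing_tour_def is_tour_def tour_edges_def noncrossing_def)
    moreover have "tour_length [] = 0" by (simp add: tour_length_def)
    ultimately show ?thesis using n0 by (intro exI[of _ "{}"]) auto
  next
    case False
    then have k: "1 \<le> k" by simp
    define s where "s = \<epsilon> / (4 * real k ^ 2)"
    have kk: "1 \<le> real k ^ 2" using k by simp
    have s0: "0 < s" using e k by (simp add: s_def)
    have s4: "s \<le> \<epsilon> / 4"
      unfolding s_def using e kk k by (intro divide_left_mono) auto
    have s1: "s < 1" using s4 e by simp
    have sk: "6 * s * real k ^ 2 = 3/2 * \<epsilon>" using k by (simp add: s_def)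
    define X where "X = set (TT s k)"
    have fin: "finite X" by (simp add: X_def)
    have card: "card X = n" unfolding X_def nk
      using distinct_card[OF TT_distinct[OF s0 s1]] TT_len by simp
    have nc: "noncrossing_tour X (TT s k)"
      unfolding noncrossing_tour_def is_tour_def X_def
      using TT_distinct[OF s0 s1] TT_noncrossing[OF s0 s1] by simp
    have low: "real (2*k) * (1 - s) \<le> tour_length (TT s k)" by (rule TT_lower[OF s0 s1])
    have opt: "opt_tour_length X \<le> 3/2 * \<epsilon> + 2"
    proof -
      have "opt_tour_length X \<le> tour_length (QQ s k)"
        unfolding X_def by (rule opt_le[OF QQ_tour[OF s0 s1]]) simp
      also have "\<dots> \<le> 6 * s * real k ^ 2 + 2" using QQ_upper[OF s0 _ k] s1 by simp
      finally show ?thesis using sk by simp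
    qed
    have kpos: "0 \<le> real k * (1 - \<epsilon>)" using e by simp
    have "real n / 2 * (1 - \<epsilon>) * opt_tour_length X = (real k * (1 - \<epsilon>)) * opt_tour_length X"
      using nk by simp
    also have "\<dots> \<le> (real k * (1 - \<epsilon>)) * (3/2 * \<epsilon> + 2)"
      by (rule mult_left_mono[OF opt kpos])
    also have "\<dots> \<le> real (2*k) * (1 - s)"
    proof -
      have "(1 - \<epsilon>) * (3/2 * \<epsilon> + 2) \<le> 2 * (1 - s)"
      proof -
        have "(1 - \<epsilon>) * (3/2 * \<epsilon> + 2) = 2 - \<epsilon>/2 - 3/2 * \<epsilon>^2" by (simp add: power2_eq_square field_simps)
        also have "\<dots> \<le> 2 - \<epsilon>/2" by simp
        also have "\<dots> \<le> 2 * (1 - s)" using s4 by simp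
        finally show ?thesis .
      qed
      then have "real k * ((1 - \<epsilon>) * (3/2 * \<epsilon> + 2)) \<le> real k * (2 * (1 - s))"
        by (rule mult_left_mono) simp
      then show ?thesis by (simp add: algebra_simps)
    qed
    also have "\<dots> \<le> tour_length (TT s k)" by (rule low)
    finally show ?thesis using fin card nc by blast
  qed
qed

end
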